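(* Let $C_i, C_j, C_k$ be three pairwise disjoint closed circular discs in $\mathbb{R}^2$ with non-collinear centers (in non-degenerate position). Then the feasible region $S_{i,j}\cap S_{j,k}\cap S_{i,k}$ is a convex polygon with at least $4$ and at most $6$ vertices; in particular it is never a triangle.
   Context: For two disjoint closed discs $C_a, C_b$ with centers $c_a,c_b$, let $p_a, p_b$ be the points where the segment $\overline{c_ac_b}$ meets the boundary circles of $C_a$ and $C_b$ respectively, and let $l_a, l_b$ be the lines through $p_a$, $p_b$ perpendicular to $\overline{c_ac_b}$. The slab $S_{a,b}$ is the closed region between the parallel lines $l_a$ and $l_b$. For three pairwise disjoint discs $C_i,C_j,C_k$, the feasible region is $S_{i,j}\cap S_{j,k}\cap S_{i,k}$. *)

theory Defs
  imports "HOL-Analysis.Analysis"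
begin

definition slab :: "real^2 \<Rightarrow> real \<Rightarrow> real^2 \<Rightarrow> real \<Rightarrow> (real^2) set" where
  "slab ca ra cb rb =
     (let u = cb - ca;
          pa = ca + (ra / norm u) *\<^sub>R u;
          pb = cb - (rb / norm u) *\<^sub>R u
      in {x. u \<bullet> pa \<le> u \<bullet> x \<and> u \<bullet> x \<le> u \<bullet> pb})"

definition vertices :: "(real^2) set \<Rightarrow> (real^2) set" where
  "vertices S = {v. v extreme_point_of S}"

end

theory Submission
  imports Defs "HOL-Analysis.Analysis"
begin

lemma disj_dist:
  fixes a b :: "real^2"
  assumes "ra > 0" "rb > 0" "cball a ra \<inter> cball b rb = {}"
  shows "dist a b > ra + rb"
proof (rule ccontr)
  assume "\<not> ?thesis"
  hence le: "dist a b \<le> ra + rb" by simp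
  define p where "p = a + (ra/(ra+rb)) *\<^sub>R (b - a)"
  have "dist a p = ra/(ra+rb) * dist a b" using assms
    by (simp add: p_def dist_norm norm_minus_commute)
  also have "\<dots> \<le> ra/(ra+rb) * (ra+rb)" using le assms by (intro mult_left_mono) auto
  finally have 1: "dist a p \<le> ra" using assms by simp
  have e: "1 - ra/(ra+rb) = rb/(ra+rb)" using assms by (simp add: field_simps)
  have "b - p = (b - a) - (ra/(ra+rb)) *\<^sub>R (b - a)" by (simp add: p_def algebra_simps)
  also have "\<dots> = (1 - ra/(ra+rb)) *\<^sub>R (b - a)" by (simp add: scaleR_left_diff_distrib)
  finally have "b - p = (rb/(ra+rb)) *\<^sub>R (b - a)" using e by simp
  hence "dist b p = rb/(ra+rb) * dist a b" using assms
    by (simp add: dist_norm norm_minus_commute)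
  also have "\<dots> \<le> rb/(ra+rb) * (ra+rb)" using le assms by (intro mult_left_mono) auto
  finally have 2: "dist b p \<le> rb" using assms by simp
  from 1 2 assms(3) show False by auto
qed

definition det2 :: "real^2 \<Rightarrow> real^2 \<Rightarrow> real" where
  "det2 v w = v$1 * w$2 - v$2 * w$1"

lemma inner2: "(v::real^2) \<bullet> w = v$1 * w$1 + v$2 * w$2"
  by (simp add: inner_vec_def sum_2)

lemma orth2_zero:
  assumes "det2 v w \<noteq> 0" "v \<bullet> z = 0" "w \<bullet> z = 0"
  shows "z = 0"
proof -
  have a: "v$1 * z$1 + v$2 * z$2 = 0" "w$1 * z$1 + w$2 * z$2 = 0"
    using assms by (simp_all add: inner2)
  have "z$1 * det2 v w = 0"
  proof -
    have "z$1 * det2 v w = w$2 * (v$1 * z$1 + v$2 * z$2) - v$2 * (w$1 * z$1 + w$2 * z$2)"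
      by (simp add: det2_def algebra_simps)
    thus ?thesis using a by simp
  qed
  moreover have "z$2 * det2 v w = 0"
  proof -
    have "z$2 * det2 v w = v$1 * (w$1 * z$1 + w$2 * z$2) - w$1 * (v$1 * z$1 + v$2 * z$2)"
      by (simp add: det2_def algebra_simps)
    thus ?thesis using a by simp
  qed
  ultimately show ?thesis using assms(1) by (simp add: vec_eq_iff forall_2)
qed

lemma det2_noncollinear:
  assumes "\<not> collinear {a, b, c::real^2}"
  shows "det2 (b - a) (c - a) \<noteq> 0"
proof
  assume d: "det2 (b - a) (c - a) = 0"
  define x where "x = b - a"
  define y where "y = c - a"
  have "collinear {0, x, y}"
  proof (cases "x = 0")
    case True thus ?thesis by (simp add: collinear_lemma)
  next
    case False
    hence "x$1 \<noteq> 0 \<or> x$2 \<noteq> 0" by (simp add: vec_eq_iff forall_2)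
    moreover have dd: "x$1 * y$2 = x$2 * y$1" using d by (simp add: det2_def x_def y_def)
    ultimately have "\<exists>t. y = t *\<^sub>R x"
    proof (elim disjE)
      assume h: "x$1 \<noteq> 0"
      have "y$2 = (y$1 / x$1) * x$2" using h dd
        by (metis nonzero_mult_div_cancel_left times_divide_eq_left mult.commute)
      hence "y = (y$1 / x$1) *\<^sub>R x" using h
        by (simp add: vec_eq_iff forall_2)
      thus ?thesis by blast
    next
      assume h: "x$2 \<noteq> 0"
      have "y$1 = (y$2 / x$2) * x$1" using h dd
        by (metis nonzero_mult_div_cancel_left times_divide_eq_left mult.commute)
      hence "y = (y$2 / x$2) *\<^sub>R x" using h
        by (simp add: vec_eq_iff forall_2)
      thus ?thesis by blast
    qed
    thus ?thesis by (simp add: collinear_lemma)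
  qed
  hence "collinear {b, a, c}"
    using collinear_3[of b a c] x_def y_def by simp
  hence "collinear {a, b, c}" by (simp add: insert_commute)
  with assms show False by simp
qed


lemma det2_collinear0: "collinear {0, u, v} \<Longrightarrow> det2 u v = 0"
  by (auto simp: collinear_lemma det2_def)

lemma strict_tri: "det2 u v \<noteq> 0 \<Longrightarrow> norm (u + v) < norm u + norm v"
  using norm_triangle_ineq[of u v] norm_triangle_eq_imp_collinear[of u v] det2_collinear0
  by fastforce

lemma det2_lin: "det2 (a *\<^sub>R u + b *\<^sub>R v) w = a * det2 u w + b * det2 v w"
  "det2 w (a *\<^sub>R u + b *\<^sub>R v) = a * det2 w u + b * det2 w v"
  by (simp_all add: det2_def algebra_simps)

lemma lin_indep2:
  assumes "det2 X Y \<noteq> 0" "s *\<^sub>R X + t *\<^sub>R Y = 0"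
  shows "s = 0 \<and> t = 0"
proof -
  have "det2 (s *\<^sub>R X + t *\<^sub>R Y) Y = 0" "det2 X (s *\<^sub>R X + t *\<^sub>R Y) = 0"
    using assms(2) by (simp_all add: det2_def)
  hence "s * det2 X Y = 0" "t * det2 X Y = 0"
    by (simp_all add: det2_lin det2_def algebra_simps)
  thus ?thesis using assms(1) by simp
qed

lemma solve2:
  assumes "det2 v w \<noteq> 0"
  shows "\<exists>P. v \<bullet> P = a \<and> w \<bullet> P = b"
proof -
  let ?D = "det2 v w"
  define P :: "real^2" where "P = vector [(a * w$2 - b * v$2) / ?D, (b * v$1 - a * w$1) / ?D]"
  have "v \<bullet> P = (v$1 * (a * w$2 - b * v$2) + v$2 * (b * v$1 - a * w$1)) / ?D"
    by (simp add: inner2 P_def add_divide_distrib)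
  also have "\<dots> = a * ?D / ?D" by (simp add: det2_def algebra_simps)
  finally have 1: "v \<bullet> P = a" using assms by simp
  have "w \<bullet> P = (w$1 * (a * w$2 - b * v$2) + w$2 * (b * v$1 - a * w$1)) / ?D"
    by (simp add: inner2 P_def add_divide_distrib)
  also have "\<dots> = b * ?D / ?D" by (simp add: det2_def algebra_simps)
  finally have 2: "w \<bullet> P = b" using assms by simp
  from 1 2 show ?thesis by blast
qed

lemma bounded2:
  assumes "det2 v w \<noteq> 0"
  shows "bounded {x. \<bar>v \<bullet> x\<bar> \<le> B \<and> \<bar>w \<bullet> x\<bar> \<le> B}"
proof -
  let ?D = "det2 v w"
  have c1: "x$1 * ?D = (v \<bullet> x) * w$2 - (w \<bullet> x) * v$2" for x
    by (simp add: inner2 det2_def algebra_simps)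
  have c2: "x$2 * ?D = (w \<bullet> x) * v$1 - (v \<bullet> x) * w$1" for x
    by (simp add: inner2 det2_def algebra_simps)
  let ?M = "(B * \<bar>w$2\<bar> + B * \<bar>v$2\<bar> + B * \<bar>v$1\<bar> + B * \<bar>w$1\<bar>) / \<bar>?D\<bar>"
  have "norm x \<le> ?M" if h: "\<bar>v \<bullet> x\<bar> \<le> B" "\<bar>w \<bullet> x\<bar> \<le> B" for x
  proof -
    have B0: "B \<ge> 0" using h by linarith
    have "\<bar>x$1\<bar> * \<bar>?D\<bar> \<le> B * \<bar>w$2\<bar> + B * \<bar>v$2\<bar>"
    proof -
      have "\<bar>x$1\<bar> * \<bar>?D\<bar> = \<bar>(v \<bullet> x) * w$2 - (w \<bullet> x) * v$2\<bar>" using c1[of x] by (metis abs_mult)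
      also have "\<dots> \<le> \<bar>v \<bullet> x\<bar> * \<bar>w$2\<bar> + \<bar>w \<bullet> x\<bar> * \<bar>v$2\<bar>"
        by (metis abs_mult abs_triangle_ineq4)
      also have "\<dots> \<le> B * \<bar>w$2\<bar> + B * \<bar>v$2\<bar>"
        using h by (intro add_mono mult_right_mono) auto
      finally show ?thesis .
    qed
    moreover have "\<bar>x$2\<bar> * \<bar>?D\<bar> \<le> B * \<bar>v$1\<bar> + B * \<bar>w$1\<bar>"
    proof -
      have "\<bar>x$2\<bar> * \<bar>?D\<bar> = \<bar>(w \<bullet> x) * v$1 - (v \<bullet> x) * w$1\<bar>" using c2[of x] by (metis abs_mult)
      also have "\<dots> \<le> \<bar>w \<bullet> x\<bar> * \<bar>v$1\<bar> + \<bar>v \<bullet> x\<bar> * \<bar>w$1\<bar>"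
        by (metis abs_mult abs_triangle_ineq4)
      also have "\<dots> \<le> B * \<bar>v$1\<bar> + B * \<bar>w$1\<bar>"
        using h by (intro add_mono mult_right_mono) auto
      finally show ?thesis .
    qed
    ultimately have "(\<bar>x$1\<bar> + \<bar>x$2\<bar>) * \<bar>?D\<bar> \<le> B * \<bar>w$2\<bar> + B * \<bar>v$2\<bar> + B * \<bar>v$1\<bar> + B * \<bar>w$1\<bar>"
      by (simp add: distrib_right)
    hence "\<bar>x$1\<bar> + \<bar>x$2\<bar> \<le> ?M" using assms by (simp add: pos_le_divide_eq)
    moreover have "norm x \<le> \<bar>x$1\<bar> + \<bar>x$2\<bar>" using norm_le_l1_cart[of x] by (simp add: sum_2)
    ultimately show ?thesis by linarith
  qed
  thus ?thesis unfolding bounded_iff by blast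
qed

definition gg :: "real^2 \<Rightarrow> real \<Rightarrow> real^2 \<Rightarrow> real^2 \<Rightarrow> real" where
  "gg a ra b x = (x - a) \<bullet> (b - a) / norm (b - a) - ra"

lemma slab_gg:
  assumes "a \<noteq> b"
  shows "slab a ra b rb = {x. gg a ra b x \<ge> 0 \<and> gg b rb a x \<ge> 0}"
proof -
  let ?u = "b - a" let ?n = "norm (b - a)"
  have n: "?n > 0" using assms by simp
  have uu: "?u \<bullet> ?u = ?n * ?n" by (simp add: dot_square_norm power2_eq_square)
  have pa: "?u \<bullet> (a + (ra / ?n) *\<^sub>R ?u) = ?u \<bullet> a + ra * ?n"
    using n uu by (simp add: inner_add_right)
  have pb: "?u \<bullet> (b - (rb / ?n) *\<^sub>R ?u) = ?u \<bullet> b - rb * ?n"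
    using n uu by (simp add: inner_diff_right)
  have e1: "(?u \<bullet> a + ra * ?n \<le> ?u \<bullet> x) \<longleftrightarrow> gg a ra b x \<ge> 0" for x
  proof -
    have xu: "(x - a) \<bullet> ?u = ?u \<bullet> x - ?u \<bullet> a" by (metis inner_diff_left inner_commute)
    have "(?u \<bullet> a + ra * ?n \<le> ?u \<bullet> x) \<longleftrightarrow> ra * ?n \<le> (x - a) \<bullet> ?u"
      unfolding xu by linarith
    also have "\<dots> \<longleftrightarrow> ra \<le> (x - a) \<bullet> ?u / ?n" using n by (simp add: pos_le_divide_eq)
    finally show ?thesis by (simp add: gg_def)
  qed
  have e2: "(?u \<bullet> x \<le> ?u \<bullet> b - rb * ?n) \<longleftrightarrow> gg b rb a x \<ge> 0" for x
  proof -
    have na: "norm (a - b) = ?n" by (simp add: norm_minus_commute)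
    have "(?u \<bullet> x \<le> ?u \<bullet> b - rb * ?n) \<longleftrightarrow> rb * ?n \<le> (x - b) \<bullet> (a - b)"
      by (simp add: inner_diff_left inner_diff_right inner_commute algebra_simps)
    also have "\<dots> \<longleftrightarrow> rb \<le> (x - b) \<bullet> (a - b) / ?n" using n by (simp add: pos_le_divide_eq)
    finally show ?thesis by (simp add: gg_def na)
  qed
  show ?thesis unfolding slab_def Let_def using pa pb e1 e2 by auto
qed

lemma gg_pair:
  assumes "a \<noteq> b"
  shows "gg a ra b x + gg b rb a x = dist a b - ra - rb"
proof -
  let ?n = "norm (b - a)"
  have n: "?n > 0" using assms by simp
  have "(x - a) \<bullet> (b - a) + (x - b) \<bullet> (a - b) = (b - a) \<bullet> (b - a)"
    by (simp add: inner_diff_left inner_diff_right inner_commute algebra_simps)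
  also have "\<dots> = ?n * ?n" by (simp add: dot_square_norm power2_eq_square)
  finally have st: "(x - a) \<bullet> (b - a) + (x - b) \<bullet> (a - b) = ?n * ?n" .
  have na: "norm (a - b) = ?n" by (simp add: norm_minus_commute)
  have "gg a ra b x + gg b rb a x = ((x - a) \<bullet> (b - a) + (x - b) \<bullet> (a - b)) / ?n - ra - rb"
    by (simp add: gg_def na add_divide_distrib)
  also have "\<dots> = ?n - ra - rb" using n st by simp
  finally show ?thesis by (simp add: dist_norm norm_minus_commute)
qed

lemma gg_lin: "gg a ra b x = ((1 / norm (b - a)) *\<^sub>R (b - a)) \<bullet> x - (a \<bullet> (b - a) / norm (b - a) + ra)"
proof -
  have f1: "(x - a) \<bullet> (b - a) = x \<bullet> (b - a) - a \<bullet> (b - a)" by (simp add: inner_diff_left)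
  have c: "(b - a) \<bullet> x = x \<bullet> (b - a)" by (rule inner_commute)
  have "((1 / norm (b - a)) *\<^sub>R (b - a)) \<bullet> x = (1 / norm (b - a)) * ((b - a) \<bullet> x)"
    by (rule inner_scaleR_left)
  also have "\<dots> = x \<bullet> (b - a) / norm (b - a)" unfolding c by simp
  finally have f2: "((1 / norm (b - a)) *\<^sub>R (b - a)) \<bullet> x = x \<bullet> (b - a) / norm (b - a)" .
  have "gg a ra b x = (x \<bullet> (b - a) - a \<bullet> (b - a)) / norm (b - a) - ra" unfolding gg_def f1 ..
  also have "\<dots> = x \<bullet> (b - a) / norm (b - a) - (a \<bullet> (b - a) / norm (b - a) + ra)"
    by (simp add: diff_divide_distrib)
  finally show ?thesis by (simp only: f2)
qed

lemma gg_radical: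
  assumes "dist a b > ra + rb" "ra > 0" "rb > 0"
    and "norm (Q - a)^2 - ra^2 = norm (Q - b)^2 - rb^2"
  shows "gg a ra b Q > 0"
proof -
  let ?d = "norm (b - a)"
  have d: "?d = dist a b" by (simp add: dist_norm norm_minus_commute)
  have "norm (Q - b)^2 = norm ((Q - a) - (b - a))^2" by simp
  also have "\<dots> = norm (Q - a)^2 - 2 * ((Q - a) \<bullet> (b - a)) + ?d^2"
    by (simp add: power2_norm_eq_inner inner_diff_left inner_diff_right inner_commute algebra_simps)
  finally have "2 * ((Q - a) \<bullet> (b - a)) = ?d^2 + ra^2 - rb^2" using assms(4) by simp
  moreover have "?d^2 + ra^2 - rb^2 > 2 * ra * ?d"
  proof -
    have "?d - ra > rb" using assms d by simp
    hence "(?d - ra)^2 > rb^2" using assms by (intro power_strict_mono) auto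
    thus ?thesis by (simp add: power2_eq_square algebra_simps)
  qed
  moreover have "?d > 0" using assms d by (metis add_pos_pos less_trans)
  ultimately have "(Q - a) \<bullet> (b - a) / ?d > ra" by (simp add: pos_less_divide_eq)
  thus ?thesis by (simp add: gg_def)
qed


lemma delta_lemma:
  fixes D1 D2 D3 R1 R2 R3 K :: real
  assumes t1: "D1 < D2 + D3" and t2: "D2 < D1 + D3" and t3: "D3 < D1 + D2"
    and e1: "R1 + R2 < D1" and e2: "R2 + R3 < D2" and e3: "R3 + R1 < D3"
    and K: "K = (D1^2 + D2^2 + D3^2) / 2 - (R1 * D1 + R2 * D2 + R3 * D3)"
    and c1: "K \<le> D1 * (D1 - R1 - R2)" and c2: "K \<le> D2 * (D2 - R2 - R3)"
    and c3: "K \<le> D3 * (D3 - R3 - R1)"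
  shows False
proof -
  define di where "di = (D1 + D3 - D2) / 2 - R1"
  define dj where "dj = (D1 + D2 - D3) / 2 - R2"
  define dk where "dk = (D2 + D3 - D1) / 2 - R3"
  have h1: "(D1 - D2) * dj \<ge> D3 * dk"
  proof -
    have "D1 * (D1 - R1 - R2) - K = (D1 - D2) * dj - D3 * dk"
      unfolding K dj_def dk_def by (simp add: power2_eq_square algebra_simps field_simps)
    thus ?thesis using c1 by linarith
  qed
  have h2: "(D2 - D3) * dk \<ge> D1 * di"
  proof -
    have "D2 * (D2 - R2 - R3) - K = (D2 - D3) * dk - D1 * di"
      unfolding K di_def dk_def by (simp add: power2_eq_square algebra_simps field_simps)
    thus ?thesis using c2 by linarith
  qed
  have h3: "(D3 - D1) * di \<ge> D2 * dj"
  proof -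
    have "D3 * (D3 - R3 - R1) - K = (D3 - D1) * di - D2 * dj"
      unfolding K di_def dj_def by (simp add: power2_eq_square algebra_simps field_simps)
    thus ?thesis using c3 by linarith
  qed
  have s1: "di + dj > 0" using e1 unfolding di_def dj_def by (simp add: field_simps; linarith)
  have s2: "dj + dk > 0" using e2 unfolding dj_def dk_def by (simp add: field_simps; linarith)
  have s3: "dk + di > 0" using e3 unfolding dk_def di_def by (simp add: field_simps; linarith)
  have p1: "D1 > 0" and p2: "D2 > 0" and p3: "D3 > 0" using t1 t2 t3 by linarith+
  consider "di \<le> 0" | "dj \<le> 0" | "dk \<le> 0" | "di > 0 \<and> dj > 0 \<and> dk > 0" by linarith
  thus False
  proof cases
    case 1
    have "(D3 - D1 + D2) * di \<le> 0" using 1 t1 by (intro mult_nonneg_nonpos) auto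
    hence "D2 * dj \<le> - D2 * di" using h3 by (simp add: algebra_simps)
    hence "D2 * (di + dj) \<le> 0" by (simp add: algebra_simps)
    moreover have "D2 * (di + dj) > 0" using p2 s1 by simp
    ultimately show False by linarith
  next
    case 2
    have "(D1 - D2 + D3) * dj \<le> 0" using 2 t2 by (intro mult_nonneg_nonpos) auto
    hence "D3 * dk \<le> - D3 * dj" using h1 by (simp add: algebra_simps)
    hence "D3 * (dj + dk) \<le> 0" by (simp add: algebra_simps)
    moreover have "D3 * (dj + dk) > 0" using p3 s2 by simp
    ultimately show False by linarith
  next
    case 3
    have "(D2 - D3 + D1) * dk \<le> 0" using 3 t3 by (intro mult_nonneg_nonpos) auto
    hence "D1 * di \<le> - D1 * dk" using h2 by (simp add: algebra_simps)
    hence "D1 * (dk + di) \<le> 0" by (simp add: algebra_simps)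
    moreover have "D1 * (dk + di) > 0" using p1 s3 by simp
    ultimately show False by linarith
  next
    case 4
    have "(D1 - D2 - D3) * dj < 0" using 4 t1 by (intro mult_neg_pos) auto
    hence "D3 * dk < D3 * dj" using h1 by (simp add: algebra_simps)
    hence a: "dk < dj" using p3 by simp
    have "(D2 - D3 - D1) * dk < 0" using 4 t2 by (intro mult_neg_pos) auto
    hence "D1 * di < D1 * dk" using h2 by (simp add: algebra_simps)
    hence b: "di < dk" using p1 by simp
    have "(D3 - D1 - D2) * di < 0" using 4 t3 by (intro mult_neg_pos) auto
    hence "D2 * dj < D2 * di" using h3 by (simp add: algebra_simps)
    hence c: "dj < di" using p2 by simp
    from a b c show False by linarith
  qed
qed


lemma det2_scale: "det2 (s *\<^sub>R X) (t *\<^sub>R Y) = s * t * det2 X Y"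
  by (simp add: det2_def algebra_simps)

locale conf =
  fixes ci cj ck :: "real^2" and ri rj rk :: real
  assumes ri: "ri > 0" and rj: "rj > 0" and rk: "rk > 0"
    and dij: "cball ci ri \<inter> cball cj rj = {}"
    and djk: "cball cj rj \<inter> cball ck rk = {}"
    and dik: "cball ci ri \<inter> cball ck rk = {}"
    and nc: "\<not> collinear {ci, cj, ck}"
begin

definition src :: "nat \<Rightarrow> real^2" where
  "src n = (if n = 0 then ci else if n = 1 then cj else if n = 2 then cj else if n = 3 then ck
            else if n = 4 then ck else ci)"
definition tgt :: "nat \<Rightarrow> real^2" where
  "tgt n = (if n = 0 then cj else if n = 1 then ci else if n = 2 then ck else if n = 3 then cj
            else if n = 4 then ci else ck)"
definition rad :: "nat \<Rightarrow> real" where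
  "rad n = (if n = 0 then ri else if n = 1 then rj else if n = 2 then rj else if n = 3 then rk
            else if n = 4 then rk else ri)"
definition G :: "nat \<Rightarrow> real^2 \<Rightarrow> real" where
  "G n x = gg (src n) (rad n) (tgt n) x"
definition nv :: "nat \<Rightarrow> real^2" where
  "nv n = (1 / norm (tgt n - src n)) *\<^sub>R (tgt n - src n)"
definition off :: "nat \<Rightarrow> real" where
  "off n = src n \<bullet> (tgt n - src n) / norm (tgt n - src n) + rad n"
definition FF :: "(real^2) set" where
  "FF = {x. \<forall>n<6. G n x \<ge> 0}"

lemma six: "n < 6 \<Longrightarrow> n = 0 \<or> n = 1 \<or> n = 2 \<or> n = 3 \<or> n = 4 \<or> n = (5::nat)"
  by auto

lemma d1: "dist ci cj > ri + rj" using disj_dist[OF ri rj dij] .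
lemma d2: "dist cj ck > rj + rk" using disj_dist[OF rj rk djk] .
lemma d3: "dist ck ci > rk + ri" using disj_dist[OF ri rk dik] by (simp add: dist_commute)

lemma neq: "ci \<noteq> cj" "cj \<noteq> ck" "ck \<noteq> ci"
  using d1 d2 d3 ri rj rk by auto

lemma src_tgt: "n < 6 \<Longrightarrow> src n \<noteq> tgt n"
  using neq by (auto simp: src_def tgt_def dest!: six)

lemma dist_st: "n < 6 \<Longrightarrow> dist (src n) (tgt n) > rad n + rad (if even n then n + 1 else n - 1)"
  using d1 d2 d3 by (auto simp: src_def tgt_def rad_def dist_commute dest!: six)

lemma G_lin: "G n x = nv n \<bullet> x - off n"
  unfolding G_def nv_def off_def by (rule gg_lin)

lemma G_diff: "G n x - G n y = nv n \<bullet> (x - y)"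
  by (simp add: G_lin inner_diff_right)

lemma G_add: "G n (x + t *\<^sub>R w) = G n x + t * (nv n \<bullet> w)"
  by (simp add: G_lin inner_add_right)

lemma G_comb: "G n ((1 - t) *\<^sub>R x + t *\<^sub>R y) = (1 - t) * G n x + t * G n y"
  by (simp add: G_lin inner_add_right algebra_simps)

lemma G_comb3: "u + v + w = 1 \<Longrightarrow> G n (u *\<^sub>R a + v *\<^sub>R b + w *\<^sub>R c) = u * G n a + v * G n b + w * G n c"
  by (simp add: G_lin inner_add_right algebra_simps)
     (metis (no_types, lifting) add.commute add.left_commute mult.commute mult_1 diff_add_cancel
        distrib_right)

lemma FF_eq: "slab ci ri cj rj \<inter> slab cj rj ck rk \<inter> slab ci ri ck rk = FF"
proof -
  have "slab ci ri cj rj = {x. G 0 x \<ge> 0 \<and> G 1 x \<ge> 0}"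
    using slab_gg[OF neq(1)] by (simp add: G_def src_def tgt_def rad_def)
  moreover have "slab cj rj ck rk = {x. G 2 x \<ge> 0 \<and> G 3 x \<ge> 0}"
    using slab_gg[OF neq(2)] by (simp add: G_def src_def tgt_def rad_def)
  moreover have "slab ci ri ck rk = {x. G 5 x \<ge> 0 \<and> G 4 x \<ge> 0}"
    using slab_gg[of ci ck] neq(3) by (simp add: G_def src_def tgt_def rad_def)
  ultimately show ?thesis unfolding FF_def by (auto dest!: six)
qed

lemma pair_pos:
  assumes "n < 6" "m < 6" "n \<noteq> m" "n div 2 = m div 2"
  shows "G n x + G m x > 0"
proof -
  have c: "(n = 0 \<and> m = 1) \<or> (n = 1 \<and> m = 0) \<or> (n = 2 \<and> m = 3) \<or> (n = 3 \<and> m = 2) \<or>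
      (n = 4 \<and> m = 5) \<or> (n = 5 \<and> m = 4)"
    using assms by (auto dest!: six)
  have p01: "G 0 x + G 1 x > 0" using gg_pair[OF neq(1), of ri x rj] d1
    by (simp add: G_def src_def tgt_def rad_def)
  have p23: "G 2 x + G 3 x > 0" using gg_pair[OF neq(2), of rj x rk] d2
    by (simp add: G_def src_def tgt_def rad_def)
  have p45: "G 4 x + G 5 x > 0" using gg_pair[OF neq(3), of rk x ri] d3
    by (simp add: G_def src_def tgt_def rad_def)
  from c p01 p23 p45 show ?thesis by (auto simp: add.commute)
qed

lemma pair_sum:
  "G 0 x + G 1 x = dist ci cj - ri - rj"
  "G 2 x + G 3 x = dist cj ck - rj - rk"
  "G 4 x + G 5 x = dist ck ci - rk - ri"
  using gg_pair[OF neq(1), of ri x rj] gg_pair[OF neq(2), of rj x rk] gg_pair[OF neq(3), of rk x ri]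
  by (simp_all add: G_def src_def tgt_def rad_def)

definition "Dl = det2 (cj - ci) (ck - ci)"

lemma Dl: "Dl \<noteq> 0" unfolding Dl_def by (rule det2_noncollinear[OF nc])

definition "dirv k = (if k = (0::nat) then cj - ci else if k = 1 then ck - cj else ci - ck)"

lemma det_a: "det2 (cj - ci) (ck - cj) = Dl" unfolding Dl_def det2_def by (simp add: algebra_simps)
lemma det_b: "det2 (ck - cj) (ci - ck) = Dl" unfolding Dl_def det2_def by (simp add: algebra_simps)
lemma det_c: "det2 (ci - ck) (cj - ci) = Dl" unfolding Dl_def det2_def by (simp add: algebra_simps)
lemma det_anti: "det2 X Y = - det2 Y X" unfolding det2_def by simp

lemma dirv_det:
  assumes "k < 3" "l < 3" "k \<noteq> l"
  shows "(det2 (dirv k) (dirv l))^2 = Dl^2"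
proof -
  have "k = 0 \<and> l = 1 \<or> k = 1 \<and> l = 0 \<or> k = 1 \<and> l = 2 \<or> k = 2 \<and> l = 1 \<or> k = 0 \<and> l = 2 \<or> k = 2 \<and> l = 0"
    using assms by auto
  thus ?thesis
    using det_a det_b det_c det_anti[of "ck - cj" "cj - ci"] det_anti[of "ci - ck" "ck - cj"]
      det_anti[of "cj - ci" "ci - ck"]
    unfolding dirv_def by auto
qed

lemma st_eq: "n < 6 \<Longrightarrow> tgt n - src n = (if even n then 1 else -1) *\<^sub>R dirv (n div 2)"
  by (auto simp: src_def tgt_def dirv_def dest!: six)

lemma det_st:
  assumes "n < 6" "m < 6" "n div 2 \<noteq> m div 2"
  shows "(det2 (tgt n - src n) (tgt m - src m))^2 = Dl^2"
proof -
  have "(det2 (tgt n - src n) (tgt m - src m))^2 = (det2 (dirv (n div 2)) (dirv (m div 2)))^2"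
    unfolding st_eq[OF assms(1)] st_eq[OF assms(2)] det2_scale by (auto simp: power_mult_distrib)
  also have "\<dots> = Dl^2" using assms by (intro dirv_det) auto
  finally show ?thesis .
qed

lemma nv_indep:
  assumes "n < 6" "m < 6" "n div 2 \<noteq> m div 2"
  shows "det2 (nv n) (nv m) \<noteq> 0"
proof -
  have "det2 (tgt n - src n) (tgt m - src m) \<noteq> 0"
    using det_st[OF assms] Dl by (metis power_zero_numeral zero_eq_power2)
  moreover have "norm (tgt n - src n) > 0" "norm (tgt m - src m) > 0"
    using src_tgt[OF assms(1)] src_tgt[OF assms(2)] by (metis zero_less_norm_iff right_minus_eq)+
  ultimately show ?thesis unfolding nv_def det2_scale by simp
qed

lemma nv_nz: "n < 6 \<Longrightarrow> nv n \<noteq> 0"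
  using src_tgt[of n] by (auto simp: nv_def)

end


context conf begin

lemma radical: "\<exists>P. \<forall>n<6. G n P > 0"
proof -
  obtain P where P1: "(cj - ci) \<bullet> P = (norm cj^2 - norm ci^2 - rj^2 + ri^2) / 2"
    and P2: "(ck - ci) \<bullet> P = (norm ck^2 - norm ci^2 - rk^2 + ri^2) / 2"
    using solve2[OF Dl[unfolded Dl_def]] by blast
  have ex: "norm (P - c)^2 = norm P^2 - 2 * (c \<bullet> P) + norm c^2" for c
    by (simp add: power2_norm_eq_inner inner_diff_left inner_diff_right inner_commute algebra_simps)
  have e1: "norm (P - ci)^2 - ri^2 = norm (P - cj)^2 - rj^2"
    using P1 unfolding ex by (simp add: inner_diff_left algebra_simps)
  have e2: "norm (P - ci)^2 - ri^2 = norm (P - ck)^2 - rk^2"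
    using P2 unfolding ex by (simp add: inner_diff_left algebra_simps)
  have e3: "norm (P - cj)^2 - rj^2 = norm (P - ck)^2 - rk^2" using e1 e2 by simp
  have g0: "G 0 P > 0" unfolding G_def src_def tgt_def rad_def
    using gg_radical[OF d1 ri rj e1] by simp
  have g1: "G 1 P > 0" unfolding G_def src_def tgt_def rad_def
    using gg_radical[where a=cj and b=ci and ra=rj and rb=ri and Q=P] d1 ri rj e1 by (simp add: dist_commute add.commute)
  have g2: "G 2 P > 0" unfolding G_def src_def tgt_def rad_def
    using gg_radical[OF d2 rj rk e3] by simp
  have g3: "G 3 P > 0" unfolding G_def src_def tgt_def rad_def
    using gg_radical[where a=ck and b=cj and ra=rk and rb=rj and Q=P] d2 rj rk e3 by (simp add: dist_commute add.commute)
  have g4: "G 4 P > 0" unfolding G_def src_def tgt_def rad_def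
    using gg_radical[where a=ck and b=ci and ra=rk and rb=ri and Q=P] d3 rk ri e2 by simp
  have g5: "G 5 P > 0" unfolding G_def src_def tgt_def rad_def
    using gg_radical[where a=ci and b=ck and ra=ri and rb=rk and Q=P] d3 rk ri e2 by (simp add: dist_commute add.commute)
  have "G n P > 0" if "n < 6" for n
    using six[OF that] g0 g1 g2 g3 g4 g5 by auto
  thus ?thesis by blast
qed

lemma FF_inter: "FF = \<Inter> ((\<lambda>n. {x. nv n \<bullet> x \<ge> off n}) ` {..<6})"
  unfolding FF_def G_lin by auto

lemma FF_polyhedron: "polyhedron FF"
  unfolding FF_inter by (intro polyhedron_Inter) (auto intro: polyhedron_halfspace_ge)

lemma FF_bounded: "bounded FF"
proof -
  define B where "B = \<bar>off 0\<bar> + \<bar>off 4\<bar> + dist ci cj + dist ck ci"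
  have "FF \<subseteq> {x. \<bar>nv 0 \<bullet> x\<bar> \<le> B \<and> \<bar>nv 4 \<bullet> x\<bar> \<le> B}"
  proof
    fix x assume x: "x \<in> FF"
    hence g: "G 0 x \<ge> 0" "G 1 x \<ge> 0" "G 4 x \<ge> 0" "G 5 x \<ge> 0" unfolding FF_def by auto
    have "G 0 x \<le> dist ci cj" "G 4 x \<le> dist ck ci" using pair_sum[of x] g ri rj rk by linarith+
    moreover have "nv 0 \<bullet> x = G 0 x + off 0" "nv 4 \<bullet> x = G 4 x + off 4" by (simp_all add: G_lin)
    moreover have "dist ci cj \<ge> 0" "dist ck ci \<ge> 0" by simp_all
    ultimately show "x \<in> {x. \<bar>nv 0 \<bullet> x\<bar> \<le> B \<and> \<bar>nv 4 \<bullet> x\<bar> \<le> B}"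
      using g unfolding B_def by auto
  qed
  moreover have "bounded {x. \<bar>nv 0 \<bullet> x\<bar> \<le> B \<and> \<bar>nv 4 \<bullet> x\<bar> \<le> B}"
    by (rule bounded2) (rule nv_indep, auto)
  ultimately show ?thesis by (rule bounded_subset[rotated])
qed

lemma FF_polytope: "polytope FF"
  using FF_polyhedron FF_bounded polytope_eq_bounded_polyhedron by blast

lemma FF_open_sub: "{x. \<forall>n<6. G n x > 0} \<subseteq> interior FF"
proof (rule interior_maximal)
  show "{x. \<forall>n<6. G n x > 0} \<subseteq> FF" unfolding FF_def by (auto intro: less_imp_le)
  have "{x. \<forall>n<6. G n x > 0} = \<Inter> ((\<lambda>n. {x. nv n \<bullet> x > off n}) ` {..<6})"
    unfolding G_lin by auto
  thus "open {x. \<forall>n<6. G n x > 0}" by (auto intro!: open_INT open_halfspace_gt)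
qed

lemma FF_aff_dim: "aff_dim FF = 2"
proof -
  obtain P where "\<forall>n<6. G n P > 0" using radical by blast
  hence "interior FF \<noteq> {}" using FF_open_sub by blast
  thus ?thesis using aff_dim_nonempty_interior[of FF] by simp
qed

lemma eps:
  assumes v: "v \<in> FF" and w: "\<forall>n<6. G n v = 0 \<longrightarrow> nv n \<bullet> w = 0"
  shows "\<exists>e>0. \<forall>t. \<bar>t\<bar> \<le> e \<longrightarrow> v + t *\<^sub>R w \<in> FF"
proof -
  define ep where "ep n = (if G n v = 0 then 1 else G n v / (\<bar>nv n \<bullet> w\<bar> + 1))" for n
  have gv: "G n v \<ge> 0" if "n < 6" for n using v that unfolding FF_def by auto
  have ep_pos: "ep n > 0" if "n < 6" for n
    using gv[OF that] unfolding ep_def by (auto simp: add_pos_nonneg)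
  define e where "e = Min (ep ` {..<6})"
  have ne: "ep ` {..<6} \<noteq> {}" by (metis empty_iff image_eqI lessThan_iff zero_less_numeral)
  have "e \<in> ep ` {..<6}" unfolding e_def by (rule Min_in) (simp, rule ne)
  hence e_pos: "e > 0" using ep_pos by auto
  have e_le: "e \<le> ep n" if "n < 6" for n unfolding e_def using that by (intro Min_le) auto
  have "v + t *\<^sub>R w \<in> FF" if t: "\<bar>t\<bar> \<le> e" for t
    unfolding FF_def
  proof (intro CollectI allI impI)
    fix n :: nat assume n: "n < 6"
    show "G n (v + t *\<^sub>R w) \<ge> 0"
    proof (cases "G n v = 0")
      case True thus ?thesis using w n by (simp add: G_add)
    next
      case False
      hence gp: "G n v > 0" using gv[OF n] by simp
      let ?a = "\<bar>nv n \<bullet> w\<bar>"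
      have "\<bar>t\<bar> \<le> G n v / (?a + 1)" using t e_le[OF n] False unfolding ep_def by simp
      hence "\<bar>t\<bar> * ?a \<le> G n v / (?a + 1) * ?a" by (intro mult_right_mono) auto
      also have "\<dots> \<le> G n v"
        using gp by (simp add: field_simps)
      finally have "\<bar>t * (nv n \<bullet> w)\<bar> \<le> G n v" by (simp add: abs_mult)
      thus ?thesis by (simp add: G_add)
    qed
  qed
  thus ?thesis using e_pos by blast
qed

lemma ext_active:
  assumes "v extreme_point_of FF"
  shows "\<exists>n m. n < 6 \<and> m < 6 \<and> n \<noteq> m \<and> G n v = 0 \<and> G m v = 0"
proof (rule ccontr)
  assume na: "\<not> ?thesis"
  have v: "v \<in> FF" using assms extreme_point_of_def by blast
  define n0 where "n0 = (if \<exists>n<6. G n v = 0 then (SOME n. n < 6 \<and> G n v = 0) else 0)"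
  have n0: "n0 < 6" unfolding n0_def by (auto intro: someI2_ex)
  have act: "n = n0" if "n < 6" "G n v = 0" for n
  proof -
    have "n0 < 6 \<and> G n0 v = 0" unfolding n0_def using that by (auto intro: someI2_ex)
    thus ?thesis using na that by blast
  qed
  define w :: "real^2" where "w = vector [- (nv n0)$2, (nv n0)$1]"
  have wo: "nv n0 \<bullet> w = 0" unfolding w_def by (simp add: inner2)
  have wnz: "w \<noteq> 0"
  proof
    assume "w = 0"
    hence "(nv n0)$1 = 0" "(nv n0)$2 = 0" unfolding w_def by (auto simp: vec_eq_iff forall_2)
    hence "nv n0 = 0" by (simp add: vec_eq_iff forall_2)
    with nv_nz[OF n0] show False by simp
  qed
  have "\<forall>n<6. G n v = 0 \<longrightarrow> nv n \<bullet> w = 0" using act wo by auto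
  then obtain e where e: "e > 0" "\<forall>t. \<bar>t\<bar> \<le> e \<longrightarrow> v + t *\<^sub>R w \<in> FF"
    using eps[OF v] by blast
  let ?a = "v + (-e) *\<^sub>R w" let ?b = "v + e *\<^sub>R w"
  have ab: "?a \<in> FF" "?b \<in> FF" using e(2)[rule_format, of "-e"] e(2)[rule_format, of e] e(1) by auto
  have "?a \<noteq> ?b"
  proof
    assume "?a = ?b"
    hence "(-e) *\<^sub>R w = e *\<^sub>R w" by (metis add_left_cancel)
    hence "-e = e \<or> w = 0" by (simp only: scaleR_cancel_right)
    thus False using e(1) wnz by auto
  qed
  hence "midpoint ?a ?b \<in> open_segment ?a ?b" by simp
  moreover have "midpoint ?a ?b = v" by (simp add: midpoint_def vec_eq_iff field_simps)
  ultimately have "v \<in> open_segment ?a ?b" by metis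
  thus False using assms ab unfolding extreme_point_of_def by blast
qed

end


lemma card_filter_sum: "finite A \<Longrightarrow> card {x \<in> A. P x} = (\<Sum>x\<in>A. if P x then 1 else 0)"
  unfolding card_eq_sum by (rule sum.inter_filter)

context conf begin

definition "VV = {v. v extreme_point_of FF}"

lemma VV_fin: "finite VV"
  unfolding VV_def by (rule finite_polyhedron_extreme_points[OF FF_polyhedron])

lemma VV_sub: "VV \<subseteq> FF"
  unfolding VV_def extreme_point_of_def by auto

lemma not_ext_between:
  assumes "x extreme_point_of FF" "y \<in> FF" "z \<in> FF" "x \<noteq> y" "x \<noteq> z" "between (y, z) x"
  shows False
proof -
  have "x \<in> closed_segment y z" using assms(6) by (simp add: between_mem_segment)
  hence "x \<in> open_segment y z" using assms(4,5) by (simp add: open_segment_def)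
  thus False using assms(1-3) unfolding extreme_point_of_def by blast
qed

lemma line_two:
  assumes n: "n < 6"
  shows "card {v \<in> VV. G n v = 0} \<le> 2"
proof (rule ccontr)
  assume "\<not> ?thesis"
  hence "3 \<le> card {v \<in> VV. G n v = 0}" by linarith
  then obtain T where T: "T \<subseteq> {v \<in> VV. G n v = 0}" "card T = 3"
    by (rule obtain_subset_with_card_n)
  from T(2) obtain a b c where abc: "T = {a, b, c}" "a \<noteq> b" "b \<noteq> c" "a \<noteq> c"
    unfolding card_3_iff by blast
  have in_: "a \<in> VV" "b \<in> VV" "c \<in> VV" "G n a = 0" "G n b = 0" "G n c = 0"
    using T(1) abc by auto
  have "{a, b, c} \<subseteq> {x. nv n \<bullet> x = off n}" using in_ by (auto simp: G_lin)
  hence "aff_dim {a, b, c} \<le> aff_dim {x. nv n \<bullet> x = off n}" by (rule aff_dim_subset)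
  also have "\<dots> = 1" using nv_nz[OF n] by simp
  finally have "collinear {a, b, c}" by (simp add: collinear_aff_dim)
  hence "between (b, c) a \<or> between (c, a) b \<or> between (a, b) c"
    by (simp add: collinear_between_cases)
  moreover have ext: "a extreme_point_of FF" "b extreme_point_of FF" "c extreme_point_of FF"
    "a \<in> FF" "b \<in> FF" "c \<in> FF"
    using in_ VV_sub unfolding VV_def by auto
  ultimately show False
  proof (elim disjE)
    assume "between (b, c) a" thus False
      by (rule not_ext_between[of a b c, rotated 5]) (use abc ext in auto)
  next
    assume "between (c, a) b" thus False
      by (rule not_ext_between[of b c a, rotated 5]) (use abc ext in auto)
  next
    assume "between (a, b) c" thus False
      by (rule not_ext_between[of c a b, rotated 5]) (use abc ext in auto)
  qed
qed

lemma card_active: "v \<in> VV \<Longrightarrow> 2 \<le> card {n \<in> {..<6::nat}. G n v = 0}"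
proof -
  assume "v \<in> VV"
  then obtain n m where nm: "n < 6" "m < 6" "n \<noteq> m" "G n v = 0" "G m v = 0"
    using ext_active unfolding VV_def by blast
  have "card {n, m} \<le> card {n \<in> {..<6::nat}. G n v = 0}"
    by (rule card_mono) (use nm in auto)
  moreover have "card {n, m} = 2" using nm(3) by simp
  ultimately show ?thesis by linarith
qed

lemma upper: "card VV \<le> 6"
proof -
  have "(\<Sum>n<6. card {v \<in> VV. G n v = 0}) \<le> (\<Sum>n<(6::nat). 2)"
    by (rule sum_mono) (rule line_two, simp)
  also have "\<dots> = 12" by (simp only: sum_constant card_lessThan) simp
  finally have s12: "(\<Sum>n<6. card {v \<in> VV. G n v = 0}) \<le> 12" .
  have "(\<Sum>n<6. card {v \<in> VV. G n v = 0}) = (\<Sum>n<(6::nat). \<Sum>v\<in>VV. if G n v = 0 then 1 else 0)"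
    by (rule sum.cong[OF refl], rule card_filter_sum[OF VV_fin])
  also have "\<dots> = (\<Sum>v\<in>VV. \<Sum>n<(6::nat). if G n v = 0 then 1 else 0)"
    by (rule sum.swap)
  also have "\<dots> = (\<Sum>v\<in>VV. card {n \<in> {..<6::nat}. G n v = 0})"
    by (rule sum.cong[OF refl], rule card_filter_sum[symmetric], simp)
  finally have eq: "(\<Sum>n<6. card {v \<in> VV. G n v = 0}) = (\<Sum>v\<in>VV. card {n \<in> {..<6::nat}. G n v = 0})" .
  have "card VV * 2 = (\<Sum>v\<in>VV. (2::nat))" by (simp only: sum_constant of_nat_id)
  also have "\<dots> \<le> (\<Sum>v\<in>VV. card {n \<in> {..<6::nat}. G n v = 0})"
    by (rule sum_mono) (rule card_active)
  also have "\<dots> = (\<Sum>n<6. card {v \<in> VV. G n v = 0})" by (rule eq[symmetric])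
  also have "\<dots> \<le> 12" by (rule s12)
  finally have "card VV * 2 \<le> 12" .
  thus ?thesis by linarith
qed

end


lemma det_sq_nz: "(det2 X Y)^2 = D^2 \<Longrightarrow> D \<noteq> 0 \<Longrightarrow> det2 X Y \<noteq> 0"
  by auto

lemma mul_gg: "(N::real) > 0 \<Longrightarrow> N * (A / N - r) = A - r * N"
  by (simp add: right_diff_distrib mult.commute)

context conf begin

abbreviation "d1 \<equiv> dist ci cj"
abbreviation "d2 \<equiv> dist cj ck"
abbreviation "d3 \<equiv> dist ck ci"

lemma tri_ineq: "d1 < d2 + d3" "d2 < d1 + d3" "d3 < d1 + d2"
proof -
  have a: "det2 (ck - ci) (cj - ck) \<noteq> 0"
    by (rule det_sq_nz[OF _ Dl]) (simp add: Dl_def det2_def power2_eq_square algebra_simps)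
  have "norm ((ck - ci) + (cj - ck)) < norm (ck - ci) + norm (cj - ck)" by (rule strict_tri[OF a])
  thus "d1 < d2 + d3" by (simp add: dist_norm norm_minus_commute add.commute)
  have b: "det2 (ci - cj) (ck - ci) \<noteq> 0"
    by (rule det_sq_nz[OF _ Dl]) (simp add: Dl_def det2_def power2_eq_square algebra_simps)
  have "norm ((ci - cj) + (ck - ci)) < norm (ci - cj) + norm (ck - ci)" by (rule strict_tri[OF b])
  thus "d2 < d1 + d3" by (simp add: dist_norm norm_minus_commute)
  have c: "det2 (cj - ck) (ci - cj) \<noteq> 0"
    by (rule det_sq_nz[OF _ Dl]) (simp add: Dl_def det2_def power2_eq_square algebra_simps)
  have "norm ((cj - ck) + (ci - cj)) < norm (cj - ck) + norm (ci - cj)" by (rule strict_tri[OF c])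
  thus "d3 < d1 + d2" by (simp add: dist_norm norm_minus_commute add.commute)
qed

lemma dpos: "d1 > 0" "d2 > 0" "d3 > 0" using neq by auto

lemma inner_sum:
  "(x - ci) \<bullet> (cj - ci) + (x - cj) \<bullet> (ck - cj) + (x - ck) \<bullet> (ci - ck) = (d1^2 + d2^2 + d3^2) / 2"
proof -
  have "d1^2 = (ci - cj) \<bullet> (ci - cj)" "d2^2 = (cj - ck) \<bullet> (cj - ck)" "d3^2 = (ck - ci) \<bullet> (ck - ci)"
    by (simp_all add: dist_norm power2_norm_eq_inner)
  thus ?thesis by (simp add: inner_diff_left inner_diff_right inner_commute algebra_simps)
qed

lemma Kcyc: "d1 * G 0 x + d2 * G 2 x + d3 * G 4 x = (d1^2 + d2^2 + d3^2) / 2 - (ri * d1 + rj * d2 + rk * d3)"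
proof -
  have "d1 * G 0 x = (x - ci) \<bullet> (cj - ci) - ri * d1"
  proof -
    have "G 0 x = (x - ci) \<bullet> (cj - ci) / norm (cj - ci) - ri"
      by (simp add: G_def gg_def src_def tgt_def rad_def)
    moreover have "d1 = norm (cj - ci)" by (simp add: dist_norm norm_minus_commute)
    ultimately show ?thesis using dpos by (simp add: mul_gg)
  qed
  moreover have "d2 * G 2 x = (x - cj) \<bullet> (ck - cj) - rj * d2"
  proof -
    have "G 2 x = (x - cj) \<bullet> (ck - cj) / norm (ck - cj) - rj"
      by (simp add: G_def gg_def src_def tgt_def rad_def)
    moreover have "d2 = norm (ck - cj)" by (simp add: dist_norm norm_minus_commute)
    ultimately show ?thesis using dpos by (simp add: mul_gg)
  qed
  moreover have "d3 * G 4 x = (x - ck) \<bullet> (ci - ck) - rk * d3"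
  proof -
    have "G 4 x = (x - ck) \<bullet> (ci - ck) / norm (ci - ck) - rk"
      by (simp add: G_def gg_def src_def tgt_def rad_def)
    moreover have "d3 = norm (ci - ck)" by (simp add: dist_norm norm_minus_commute)
    ultimately show ?thesis using dpos by (simp add: mul_gg)
  qed
  ultimately show ?thesis using inner_sum[of x] by linarith
qed

lemma inner_sum2:
  "(x - cj) \<bullet> (ci - cj) + (x - ck) \<bullet> (cj - ck) + (x - ci) \<bullet> (ck - ci) = (d1^2 + d2^2 + d3^2) / 2"
proof -
  have "d1^2 = (ci - cj) \<bullet> (ci - cj)" "d2^2 = (cj - ck) \<bullet> (cj - ck)" "d3^2 = (ck - ci) \<bullet> (ck - ci)"
    by (simp_all add: dist_norm power2_norm_eq_inner)
  thus ?thesis by (simp add: inner_diff_left inner_diff_right inner_commute algebra_simps)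
qed

lemma Kanti: "d1 * G 1 x + d2 * G 3 x + d3 * G 5 x = (d1^2 + d2^2 + d3^2) / 2 - (rj * d1 + rk * d2 + ri * d3)"
proof -
  have "d1 * G 1 x = (x - cj) \<bullet> (ci - cj) - rj * d1"
  proof -
    have "G 1 x = (x - cj) \<bullet> (ci - cj) / norm (ci - cj) - rj"
      by (simp add: G_def gg_def src_def tgt_def rad_def)
    moreover have "d1 = norm (ci - cj)" by (simp add: dist_norm norm_minus_commute)
    ultimately show ?thesis using dpos by (simp add: mul_gg)
  qed
  moreover have "d2 * G 3 x = (x - ck) \<bullet> (cj - ck) - rk * d2"
  proof -
    have "G 3 x = (x - ck) \<bullet> (cj - ck) / norm (cj - ck) - rk"
      by (simp add: G_def gg_def src_def tgt_def rad_def)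
    moreover have "d2 = norm (cj - ck)" by (simp add: dist_norm norm_minus_commute)
    ultimately show ?thesis using dpos by (simp add: mul_gg)
  qed
  moreover have "d3 * G 5 x = (x - ci) \<bullet> (ck - ci) - ri * d3"
  proof -
    have "G 5 x = (x - ci) \<bullet> (ck - ci) / norm (ck - ci) - ri"
      by (simp add: G_def gg_def src_def tgt_def rad_def)
    moreover have "d3 = norm (ck - ci)" by (simp add: dist_norm norm_minus_commute)
    ultimately show ?thesis using dpos by (simp add: mul_gg)
  qed
  ultimately show ?thesis using inner_sum2[of x] by linarith
qed

lemma in_FF: "x \<in> FF \<Longrightarrow> n < 6 \<Longrightarrow> G n x \<ge> 0" unfolding FF_def by auto

lemma cyc_false:
  assumes "a \<in> FF" "b \<in> FF" "c \<in> FF"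
    and "G 2 a = 0" "G 4 a = 0" "G 4 b = 0" "G 0 b = 0" "G 0 c = 0" "G 2 c = 0"
  shows False
proof -
  let ?K = "(d1^2 + d2^2 + d3^2) / 2 - (ri * d1 + rj * d2 + rk * d3)"
  have "?K = d1 * G 0 a" using Kcyc[of a] assms by simp
  also have "\<dots> \<le> d1 * (d1 - ri - rj)"
    using pair_sum(1)[of a] in_FF[OF assms(1), of 1] dpos by (intro mult_left_mono) auto
  finally have c1: "?K \<le> d1 * (d1 - ri - rj)" .
  have "?K = d2 * G 2 b" using Kcyc[of b] assms by simp
  also have "\<dots> \<le> d2 * (d2 - rj - rk)"
    using pair_sum(2)[of b] in_FF[OF assms(2), of 3] dpos by (intro mult_left_mono) auto
  finally have c2: "?K \<le> d2 * (d2 - rj - rk)" .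
  have "?K = d3 * G 4 c" using Kcyc[of c] assms by simp
  also have "\<dots> \<le> d3 * (d3 - rk - ri)"
    using pair_sum(3)[of c] in_FF[OF assms(3), of 5] dpos by (intro mult_left_mono) auto
  finally have c3: "?K \<le> d3 * (d3 - rk - ri)" .
  show False
    by (rule delta_lemma[OF tri_ineq _ _ _ refl c1 c2 c3]) (use d1 d2 d3 in \<open>simp_all add: dist_commute\<close>)
qed

lemma anti_false:
  assumes "a \<in> FF" "b \<in> FF" "c \<in> FF"
    and "G 3 a = 0" "G 5 a = 0" "G 5 b = 0" "G 1 b = 0" "G 1 c = 0" "G 3 c = 0"
  shows False
proof -
  let ?K = "(d2^2 + d1^2 + d3^2) / 2 - (rk * d2 + rj * d1 + ri * d3)"
  have "?K = d1 * G 1 a" using Kanti[of a] assms by (simp add: algebra_simps)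
  also have "\<dots> \<le> d1 * (d1 - rj - ri)"
    using pair_sum(1)[of a] in_FF[OF assms(1), of 0] dpos by (intro mult_left_mono) auto
  finally have c2: "?K \<le> d1 * (d1 - rj - ri)" .
  have "?K = d2 * G 3 b" using Kanti[of b] assms by (simp add: algebra_simps)
  also have "\<dots> \<le> d2 * (d2 - rk - rj)"
    using pair_sum(2)[of b] in_FF[OF assms(2), of 2] dpos by (intro mult_left_mono) auto
  finally have c1: "?K \<le> d2 * (d2 - rk - rj)" .
  have "?K = d3 * G 5 c" using Kanti[of c] assms by (simp add: algebra_simps)
  also have "\<dots> \<le> d3 * (d3 - ri - rk)"
    using pair_sum(3)[of c] in_FF[OF assms(3), of 4] dpos by (intro mult_left_mono) auto
  finally have c3: "?K \<le> d3 * (d3 - ri - rk)" .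
  show False
    by (rule delta_lemma[of d2 d1 d3 rk rj ri, OF _ _ _ _ _ _ refl c1 c2 c3])
       (use tri_ineq d1 d2 d3 in \<open>simp_all add: dist_commute add.commute\<close>)
qed

end


context conf begin

definition TRI :: "nat \<Rightarrow> nat \<Rightarrow> nat \<Rightarrow> real^2 \<Rightarrow> real^2 \<Rightarrow> real^2 \<Rightarrow> bool" where
  "TRI p q r a b c \<longleftrightarrow> p < 6 \<and> q < 6 \<and> r < 6 \<and> a \<in> FF \<and> b \<in> FF \<and> c \<in> FF \<and>
     \<not> collinear {a, b, c} \<and>
     G p b = 0 \<and> G p c = 0 \<and> G p a > 0 \<and> G q c = 0 \<and> G q a = 0 \<and> G q b > 0 \<and>
     G r a = 0 \<and> G r b = 0 \<and> G r c > 0"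

lemma TRI_swap12: "TRI p q r a b c \<Longrightarrow> TRI q p r b a c"
  unfolding TRI_def by (auto simp: insert_commute)
lemma TRI_swap23: "TRI p q r a b c \<Longrightarrow> TRI p r q a c b"
  unfolding TRI_def by (auto simp: insert_commute)
lemma TRI_swap13: "TRI p q r a b c \<Longrightarrow> TRI r q p c b a"
  unfolding TRI_def by (auto simp: insert_commute)

lemma vec_rel:
  assumes "TRI p q r a b c"
  shows "(1 / G p a) *\<^sub>R nv p + (1 / G q b) *\<^sub>R nv q + (1 / G r c) *\<^sub>R nv r = 0"
proof -
  note T = assms[unfolded TRI_def]
  have det: "det2 (b - a) (c - a) \<noteq> 0" using T det2_noncollinear by blast
  define Z where "Z = (1 / G p a) *\<^sub>R nv p + (1 / G q b) *\<^sub>R nv q + (1 / G r c) *\<^sub>R nv r"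
  have iz: "Z \<bullet> x = (1 / G p a) * (nv p \<bullet> x) + (1 / G q b) * (nv q \<bullet> x) + (1 / G r c) * (nv r \<bullet> x)" for x
    unfolding Z_def by (simp add: inner_add_left)
  have "Z \<bullet> (b - a) = (1 / G p a) * (G p b - G p a) + (1 / G q b) * (G q b - G q a) + (1 / G r c) * (G r b - G r a)"
    unfolding iz G_diff ..
  also have "\<dots> = 0" using T by simp
  finally have 1: "(b - a) \<bullet> Z = 0" by (simp add: inner_commute)
  have "Z \<bullet> (c - a) = (1 / G p a) * (G p c - G p a) + (1 / G q b) * (G q c - G q a) + (1 / G r c) * (G r c - G r a)"
    unfolding iz G_diff ..
  also have "\<dots> = 0" using T by simp
  finally have 2: "(c - a) \<bullet> Z = 0" by (simp add: inner_commute)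
  have "Z = 0" by (rule orth2_zero[OF det 1 2])
  thus ?thesis unfolding Z_def .
qed

lemma nv_dirv:
  assumes "n < 6"
  shows "nv n = ((if even n then 1 else -1) / norm (dirv (n div 2))) *\<^sub>R dirv (n div 2)"
proof -
  let ?s = "(if even n then 1 else -1) :: real"
  have "\<bar>?s\<bar> = 1" by simp
  have "nv n = (1 / norm (?s *\<^sub>R dirv (n div 2))) *\<^sub>R (?s *\<^sub>R dirv (n div 2))"
    unfolding nv_def st_eq[OF assms] ..
  also have "\<dots> = (?s / norm (dirv (n div 2))) *\<^sub>R dirv (n div 2)"
    by (simp add: abs_if)
  finally show ?thesis .
qed

lemma dirv_pos: "norm (dirv k) > 0" using neq unfolding dirv_def by auto

lemma dirv_vals: "dirv 0 = cj - ci" "dirv 1 = ck - cj" "dirv 2 = ci - ck" "dirv (Suc 0) = ck - cj"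
  unfolding dirv_def by simp_all

lemma rel_lemma:
  fixes al be ga :: real
  assumes "al *\<^sub>R (cj - ci) + be *\<^sub>R (ck - cj) + ga *\<^sub>R (ci - ck) = 0"
  shows "al = ga \<and> be = ga"
proof -
  have "(al - ga) *\<^sub>R (cj - ci) + (be - ga) *\<^sub>R (ck - cj)
      = al *\<^sub>R (cj - ci) + be *\<^sub>R (ck - cj) + ga *\<^sub>R (ci - ck)"
    by (simp add: scaleR_diff_left scaleR_diff_right algebra_simps)
  also have "\<dots> = 0" by (rule assms)
  finally have z: "(al - ga) *\<^sub>R (cj - ci) + (be - ga) *\<^sub>R (ck - cj) = 0" .
  have "al - ga = 0 \<and> be - ga = 0" by (rule lin_indep2[OF _ z]) (simp add: det_a Dl)
  thus ?thesis by simp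
qed

lemma sgn_lemma:
  fixes N g :: real
  assumes "N > 0" "g > 0"
  shows "((if e then 1 else -1) / N / g > 0) \<longleftrightarrow> e"
  using assms by (cases e) (auto simp: field_simps dest: mult_pos_pos[of N g])

lemma tri_core:
  assumes T: "TRI p q r a b c" and cl: "p div 2 = 0" "q div 2 = 1" "r div 2 = 2"
  shows False
proof -
  note TT = T[unfolded TRI_def]
  define sp where "sp = (if even p then 1 else -1 :: real)"
  define sq where "sq = (if even q then 1 else -1 :: real)"
  define sr where "sr = (if even r then 1 else -1 :: real)"
  define al where "al = sp / norm (dirv 0) / G p a"
  define be where "be = sq / norm (dirv 1) / G q b"
  define ga where "ga = sr / norm (dirv 2) / G r c"
  have "(1 / G p a) *\<^sub>R nv p = al *\<^sub>R (cj - ci)"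
    using nv_dirv[of p] TT cl by (simp add: al_def sp_def dirv_vals mult.commute)
  moreover have "(1 / G q b) *\<^sub>R nv q = be *\<^sub>R (ck - cj)"
    using nv_dirv[of q] TT cl by (simp add: be_def sq_def dirv_vals mult.commute)
  moreover have "(1 / G r c) *\<^sub>R nv r = ga *\<^sub>R (ci - ck)"
    using nv_dirv[of r] TT cl by (simp add: ga_def sr_def dirv_vals mult.commute)
  ultimately have "al *\<^sub>R (cj - ci) + be *\<^sub>R (ck - cj) + ga *\<^sub>R (ci - ck) = 0"
    using vec_rel[OF T] by simp
  hence eq: "al = ga" "be = ga" using rel_lemma by auto
  have n0: "norm (dirv 0) > 0" "norm (dirv 1) > 0" "norm (dirv 2) > 0" by (rule dirv_pos)+
  have gp: "G p a > 0" "G q b > 0" "G r c > 0" using TT by auto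
  have sal: "al > 0 \<longleftrightarrow> even p" unfolding al_def sp_def using n0(1) gp(1) by (rule sgn_lemma)
  have sbe: "be > 0 \<longleftrightarrow> even q" unfolding be_def sq_def using n0(2) gp(2) by (rule sgn_lemma)
  have sga: "ga > 0 \<longleftrightarrow> even r" unfolding ga_def sr_def using n0(3) gp(3) by (rule sgn_lemma)
  have e1: "even p = even r" using sal sga eq by simp
  have e2: "even q = even r" using sbe sga eq by simp
  have p01: "p = 0 \<or> p = 1" and q23: "q = 2 \<or> q = 3" and r45: "r = 4 \<or> r = 5"
    using cl TT by (auto dest!: six)
  have "(p = 0 \<and> q = 2 \<and> r = 4) \<or> (p = 1 \<and> q = 3 \<and> r = 5)"
    using p01 q23 r45 e1 e2 by auto
  thus False
  proof
    assume h: "p = 0 \<and> q = 2 \<and> r = 4"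
    show False by (rule cyc_false[of a b c]) (use TT h in auto)
  next
    assume h: "p = 1 \<and> q = 3 \<and> r = 5"
    show False by (rule anti_false[of a b c]) (use TT h in auto)
  qed
qed

lemma tri_false:
  assumes T: "TRI p q r a b c" and cl: "p div 2 \<noteq> q div 2" "q div 2 \<noteq> r div 2" "p div 2 \<noteq> r div 2"
  shows False
proof -
  have lt: "p div 2 < 3" "q div 2 < 3" "r div 2 < 3" using T unfolding TRI_def by auto
  consider "p div 2 = 0" "q div 2 = 1" "r div 2 = 2"
    | "p div 2 = 1" "q div 2 = 0" "r div 2 = 2"
    | "p div 2 = 0" "q div 2 = 2" "r div 2 = 1"
    | "p div 2 = 2" "q div 2 = 1" "r div 2 = 0"
    | "p div 2 = 1" "q div 2 = 2" "r div 2 = 0"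
    | "p div 2 = 2" "q div 2 = 0" "r div 2 = 1"
  proof -
    have "p div 2 = 0 \<or> p div 2 = 1 \<or> p div 2 = 2" "q div 2 = 0 \<or> q div 2 = 1 \<or> q div 2 = 2"
      "r div 2 = 0 \<or> r div 2 = 1 \<or> r div 2 = 2" using lt by auto
    thus "\<And>thesis. \<lbrakk>\<lbrakk>p div 2 = 0; q div 2 = 1; r div 2 = 2\<rbrakk> \<Longrightarrow> thesis;
      \<lbrakk>p div 2 = 1; q div 2 = 0; r div 2 = 2\<rbrakk> \<Longrightarrow> thesis;
      \<lbrakk>p div 2 = 0; q div 2 = 2; r div 2 = 1\<rbrakk> \<Longrightarrow> thesis;
      \<lbrakk>p div 2 = 2; q div 2 = 1; r div 2 = 0\<rbrakk> \<Longrightarrow> thesis;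
      \<lbrakk>p div 2 = 1; q div 2 = 2; r div 2 = 0\<rbrakk> \<Longrightarrow> thesis;
      \<lbrakk>p div 2 = 2; q div 2 = 0; r div 2 = 1\<rbrakk> \<Longrightarrow> thesis\<rbrakk> \<Longrightarrow> thesis"
      using cl by (elim disjE) auto
  qed
  thus False
  proof cases
    case 1 thus False using tri_core[OF T] by blast
  next
    case 2 thus False using tri_core[OF TRI_swap12[OF T]] by blast
  next
    case 3 thus False using tri_core[OF TRI_swap23[OF T]] by blast
  next
    case 4 thus False using tri_core[OF TRI_swap13[OF T]] by blast
  next
    case 5 thus False using tri_core[OF TRI_swap23[OF TRI_swap13[OF T]]] by blast
  next
    case 6 thus False using tri_core[OF TRI_swap23[OF TRI_swap12[OF T]]] by blast
  qed
qed

end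


lemma lin_comb_id: fixes Y A B C M u v w e :: real
  assumes h1: "Y = u * A + v * B + w * C" and h2: "Y = M + e * (M - A)" and h3: "M = B / 2 + C / 2"
    and h4: "u = 1 - v - w"
  shows "(v - (1 + e) / 2) * (B - A) + (w - (1 + e) / 2) * (C - A) = 0"
proof -
  have h3e: "e * M = e * B / 2 + e * C / 2" using h3 by (simp add: algebra_simps)
  have h5: "Y = A - v * A - w * A + v * B + w * C" using h1 h4 by (simp add: algebra_simps)
  have h6: "Y = M + e * M - e * A" using h2 by (simp add: algebra_simps)
  have "(v - (1 + e) / 2) * (B - A) + (w - (1 + e) / 2) * (C - A)
      = v * B - v * A + w * C - w * A - B / 2 - e * B / 2 + A + e * A - C / 2 - e * C / 2"
    by (simp add: algebra_simps add_divide_distrib diff_divide_distrib)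
  also have "\<dots> = 0" using h3 h3e h5 h6 by linarith
  finally show ?thesis .
qed

context conf begin

lemma FF_compact: "compact FF"
  using FF_bounded polyhedron_imp_closed[OF FF_polyhedron] by (simp add: compact_eq_bounded_closed)

lemma FF_hull: "FF = convex hull VV"
  unfolding VV_def
  by (rule Krein_Milman_Minkowski[OF FF_compact polyhedron_imp_convex[OF FF_polyhedron]])

lemma zero3:
  assumes hull: "FF = convex hull {a, b, c}" and p: "p < 6"
    and z: "G p a = 0" "G p b = 0" "G p c = 0"
  shows False
proof -
  obtain P where P: "\<forall>n<6. G n P > 0" using radical by blast
  hence "P \<in> FF" unfolding FF_def by (auto intro: less_imp_le)
  then obtain u v w where "P = u *\<^sub>R a + v *\<^sub>R b + w *\<^sub>R c" "u + v + w = 1"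
    unfolding hull convex_hull_3 by blast
  hence "G p P = 0" using z by (simp add: G_comb3)
  with P p show False by auto
qed

lemma edge:
  assumes hull: "FF = convex hull {a, b, c}" and nc: "\<not> collinear {a, b, c}"
  shows "\<exists>p<6. G p b = 0 \<and> G p c = 0"
proof (rule ccontr)
  assume na: "\<not> ?thesis"
  have inF: "a \<in> FF" "b \<in> FF" "c \<in> FF" unfolding hull by (auto intro: hull_inc)
  define m where "m = (1 - 1/2) *\<^sub>R b + (1/2::real) *\<^sub>R c"
  have gm: "G n m > 0" if n: "n < 6" for n
  proof -
    have "G n b \<ge> 0" "G n c \<ge> 0" using inF n unfolding FF_def by auto
    moreover have "G n b \<noteq> 0 \<or> G n c \<noteq> 0" using na n by auto
    ultimately show ?thesis unfolding m_def G_comb by auto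
  qed
  hence mF: "m \<in> FF" unfolding FF_def by (auto intro: less_imp_le)
  have na0: "\<forall>n<6. G n m = 0 \<longrightarrow> nv n \<bullet> (m - a) = 0" using gm by (metis less_irrefl)
  obtain e where e: "e > 0" "\<forall>t. \<bar>t\<bar> \<le> e \<longrightarrow> m + t *\<^sub>R (m - a) \<in> FF"
    using eps[OF mF na0] by blast
  define y where "y = m + e *\<^sub>R (m - a)"
  have "y \<in> FF" using e unfolding y_def by auto
  then obtain u v w where uvw: "y = u *\<^sub>R a + v *\<^sub>R b + w *\<^sub>R c" "0 \<le> u" "u + v + w = 1"
    unfolding hull convex_hull_3 by blast
  have comp: "(v - (1 + e) / 2) * (b$i - a$i) + (w - (1 + e) / 2) * (c$i - a$i) = 0" for i
  proof -
    have h1: "y$i = u * a$i + v * b$i + w * c$i" using uvw(1) by simp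
    have h2: "y$i = m$i + e * (m$i - a$i)" unfolding y_def by simp
    have h3: "m$i = b$i / 2 + c$i / 2" unfolding m_def by simp
    have h4: "u = 1 - v - w" using uvw(3) by simp
    show ?thesis by (rule lin_comb_id[OF h1 h2 h3 h4])
  qed
  have "(v - (1 + e) / 2) *\<^sub>R (b - a) + (w - (1 + e) / 2) *\<^sub>R (c - a) = 0"
    using comp by (simp add: vec_eq_iff forall_2)
  hence "v - (1 + e) / 2 = 0 \<and> w - (1 + e) / 2 = 0"
    by (rule lin_indep2[OF det2_noncollinear[OF nc]])
  hence "u = - e" using uvw(3) by simp
  thus False using uvw(2) e(1) by simp
qed

lemma lower: "4 \<le> card VV"
proof (rule ccontr)
  assume "\<not> 4 \<le> card VV"
  hence le3: "card VV \<le> 3" by linarith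
  have ad: "aff_dim VV = 2" using FF_aff_dim FF_hull aff_dim_convex_hull by metis
  have "aff_dim VV \<le> int (card VV) - 1" by (rule aff_dim_le_card[OF VV_fin])
  hence "card VV = 3" using ad le3 by linarith
  then obtain a b c where abc: "VV = {a, b, c}" "a \<noteq> b" "b \<noteq> c" "a \<noteq> c"
    unfolding card_3_iff by blast
  have hull: "FF = convex hull {a, b, c}" using FF_hull abc by simp
  have nc: "\<not> collinear {a, b, c}" using ad abc by (simp add: collinear_aff_dim)
  have inF: "a \<in> FF" "b \<in> FF" "c \<in> FF" unfolding hull by (auto intro: hull_inc)
  obtain p where p: "p < 6" "G p b = 0" "G p c = 0" using edge[OF hull nc] by blast
  obtain q where q: "q < 6" "G q c = 0" "G q a = 0"
    using edge[of b c a] hull nc by (auto simp: insert_commute)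
  obtain r where r: "r < 6" "G r a = 0" "G r b = 0"
    using edge[of c a b] hull nc by (auto simp: insert_commute)
  have pa: "G p a > 0"
  proof -
    have "G p a \<ge> 0" using inF p unfolding FF_def by auto
    moreover have "G p a \<noteq> 0" using zero3[OF hull p(1) _ p(2,3)] by blast
    ultimately show ?thesis by simp
  qed
  have qb: "G q b > 0"
  proof -
    have "G q b \<ge> 0" using inF q unfolding FF_def by auto
    moreover have "G q b \<noteq> 0" using zero3[OF hull q(1) q(3) _ q(2)] by blast
    ultimately show ?thesis by simp
  qed
  have rc: "G r c > 0"
  proof -
    have "G r c \<ge> 0" using inF r unfolding FF_def by auto
    moreover have "G r c \<noteq> 0" using zero3[OF hull r(1) r(2,3)] by blast
    ultimately show ?thesis by simp
  qed
  have cls: "p div 2 \<noteq> q div 2" if "p < 6" "q < 6" "G p x = 0" "G q x = 0" "G p y > 0" "G q y = 0"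
    for p q x y
  proof
    assume h: "p div 2 = q div 2"
    show False
    proof (cases "p = q")
      case True thus False using that by simp
    next
      case False thus False using pair_pos[OF that(1,2) False h, of x] that by simp
    qed
  qed
  have c1: "p div 2 \<noteq> q div 2" using cls[of p q c a] p q pa by simp
  have c2: "q div 2 \<noteq> r div 2" using cls[of q r a b] q r qb by simp
  have c3: "p div 2 \<noteq> r div 2" using cls[of p r b a] p r pa by simp
  have "TRI p q r a b c" unfolding TRI_def using p q r pa qb rc inF nc by auto
  thus False using tri_false c1 c2 c3 by blast
qed

end

theorem theorem2_aux:
  fixes ci cj ck :: "real^2" and ri rj rk :: real
  assumes "ri > 0" "rj > 0" "rk > 0"
    and "cball ci ri \<inter> cball cj rj = {}"
    and "cball cj rj \<inter> cball ck rk = {}"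
    and "cball ci ri \<inter> cball ck rk = {}"
    and "\<not> collinear {ci, cj, ck}"
  shows "let F = slab ci ri cj rj \<inter> slab cj rj ck rk \<inter> slab ci ri ck rk
         in polytope F \<and> aff_dim F = 2 \<and>
            4 \<le> card (vertices F) \<and> card (vertices F) \<le> 6"
proof -
  interpret conf ci cj ck ri rj rk using assms by unfold_locales
  have v: "vertices FF = VV" unfolding vertices_def VV_def ..
  show ?thesis unfolding Let_def FF_eq v using FF_polytope FF_aff_dim lower upper by simp
qed

theorem theorem2:
  fixes ci cj ck :: "real^2" and ri rj rk :: real
  assumes "ri > 0" "rj > 0" "rk > 0"
    and "cball ci ri \<inter> cball cj rj = {}"
    and "cball cj rj \<inter> cball ck rk = {}"
    and "cball ci ri \<inter> cball ck rk = {}"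
    and "\<not> collinear {ci, cj, ck}"
  shows "let F = slab ci ri cj rj \<inter> slab cj rj ck rk \<inter> slab ci ri ck rk
         in polytope F \<and> aff_dim F = 2 \<and>
            4 \<le> card (vertices F) \<and> card (vertices F) \<le> 6"
  using theorem2_aux[OF assms] .

end
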